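(* Let $X$ be a Banach space isomorphic to a Hilbert space. Then for every nonempty bounded closed convex $C\subset X$, every $\mathfrak{cm}$-nonexpansive map $T\colon C\to C$ has a fixed point.
   Context: For a bounded convex set $C$, a nonexpansive map $T\colon C\to C$ is $\mathfrak{cm}$-nonexpansive if for all $n\in\mathbb{N}$, $y\in C$ and sequences $(u_i)_{i=1}^\infty\subset C$: $\limsup_{i\to\infty}\sup_{A\subset\{1,\dots,n\}}\|\sum_{k\in A}(Tu_{i+k}-Ty)\|\le\limsup_{i\to\infty}\sup_{A\subset\{1,\dots,n\}}\|\sum_{k\in A}(u_{i+k}-y)\|$, where $\|\cdot\|$ is the norm of $X$. *)

theory Defs
  imports "HOL-Analysis.Analysis"
begin

definition nonexpansive_on :: "'a::real_normed_vector set \<Rightarrow> ('a \<Rightarrow> 'a) \<Rightarrow> bool" where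
  "nonexpansive_on C T \<longleftrightarrow> (\<forall>x\<in>C. \<forall>y\<in>C. norm (T x - T y) \<le> norm (x - y))"

definition cm_block :: "nat \<Rightarrow> (nat \<Rightarrow> 'a::real_normed_vector) \<Rightarrow> 'a \<Rightarrow> nat \<Rightarrow> real" where
  "cm_block n v y i = Max ((\<lambda>A. norm (\<Sum>k\<in>A. (v (i + k) - y))) ` Pow {1..n})"

definition cm_nonexpansive_on :: "'a::real_normed_vector set \<Rightarrow> ('a \<Rightarrow> 'a) \<Rightarrow> bool" where
  "cm_nonexpansive_on C T \<longleftrightarrow> nonexpansive_on C T \<and>
     (\<forall>n::nat. \<forall>y\<in>C. \<forall>u::nat \<Rightarrow> 'a. (\<forall>i. u i \<in> C) \<longrightarrow>
        limsup (\<lambda>i. ereal (cm_block n (\<lambda>j. T (u j)) (T y) i))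
          \<le> limsup (\<lambda>i. ereal (cm_block n u y i)))"

end

theory Submission
  imports Defs "HOL-Library.Diagonal_Subsequence"
begin


lemma bounded_real_subseq:
  fixes s :: "nat \<Rightarrow> real"
  assumes "\<And>n. \<bar>s n\<bar> \<le> K"
  shows "\<exists>r l. strict_mono r \<and> (s \<circ> r) \<longlonglongrightarrow> l"
proof -
  obtain r where r: "strict_mono r" "monoseq (\<lambda>n. s (r n))" using seq_monosub by blast
  have "Bseq (\<lambda>n. s (r n))" using assms by (intro BseqI'[of _ K]) auto
  then have "convergent (\<lambda>n. s (r n))" using r Bseq_monoseq_convergent by blast
  then show ?thesis using r unfolding convergent_def o_def by blast
qed

lemma cesaro0:
  fixes \<eta> :: "nat \<Rightarrow> real"
  assumes lim: "\<eta> \<longlonglongrightarrow> 0" and nn: "\<And>a. 0 \<le> \<eta> a"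
  shows "(\<lambda>N. (\<Sum>a<Suc N. \<eta> a) / real (Suc N)) \<longlonglongrightarrow> 0"
proof (rule LIMSEQ_I)
  fix e :: real assume e: "0 < e"
  from LIMSEQ_D[OF lim, of "e/2"] e obtain N1 where N1: "\<And>a. a \<ge> N1 \<Longrightarrow> \<bar>\<eta> a\<bar> < e/2" by auto
  define S1 where "S1 = (\<Sum>a<N1. \<eta> a)"
  have S1: "0 \<le> S1" unfolding S1_def using nn by (simp add: sum_nonneg)
  obtain N2 :: nat where N2: "S1 / (e/2) < real N2" using reals_Archimedean2 by blast
  show "\<exists>no. \<forall>N\<ge>no. norm ((\<Sum>a<Suc N. \<eta> a) / real (Suc N) - 0) < e"
  proof (intro exI allI impI)
    fix N assume "N \<ge> N2"
    have sp: "(\<Sum>a<Suc N. \<eta> a) = (\<Sum>a\<in>{..<Suc N} \<inter> {..<N1}. \<eta> a) + (\<Sum>a\<in>{..<Suc N} - {..<N1}. \<eta> a)"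
      by (rule sum.Int_Diff) simp
    have "(\<Sum>a\<in>{..<Suc N} \<inter> {..<N1}. \<eta> a) \<le> S1"
      unfolding S1_def by (rule sum_mono2) (auto simp: nn)
    moreover have "(\<Sum>a\<in>{..<Suc N} - {..<N1}. \<eta> a) \<le> (\<Sum>a\<in>{..<Suc N} - {..<N1}. e/2)"
      proof (rule sum_mono)
        fix a assume "a \<in> {..<Suc N} - {..<N1}"
        then have "a \<ge> N1" by auto
        then show "\<eta> a \<le> e/2" using N1[of a] by linarith
      qed
    moreover have "(\<Sum>a\<in>{..<Suc N} - {..<N1}. e/2) \<le> real (Suc N) * (e/2)"
    proof -
      have "card ({..<Suc N} - {..<N1}) \<le> Suc N" by (rule order_trans[OF card_mono[of "{..<Suc N}"]]) auto
      then show ?thesis using e by (simp add: mult_right_mono)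
    qed
    ultimately have le: "(\<Sum>a<Suc N. \<eta> a) \<le> S1 + real (Suc N) * (e/2)" using sp by linarith
    have "S1 < real (Suc N) * (e/2)" using N2 \<open>N \<ge> N2\<close> e proof -
      have "S1 < real N2 * (e/2)" using N2 e by (simp add: divide_less_eq)
      also have "\<dots> \<le> real (Suc N) * (e/2)" using \<open>N \<ge> N2\<close> e by (intro mult_right_mono) auto
      finally show ?thesis .
    qed
    then have "(\<Sum>a<Suc N. \<eta> a) < e * real (Suc N)" using le by (simp add: mult.commute)
    then have "(\<Sum>a<Suc N. \<eta> a) / real (Suc N) < e" by (subst pos_divide_less_eq) auto
    moreover have "0 \<le> (\<Sum>a<Suc N. \<eta> a)" using nn by (simp add: sum_nonneg)
    ultimately show "norm ((\<Sum>a<Suc N. \<eta> a) / real (Suc N) - 0) < e"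
      by simp
  qed
qed



fun thin :: "(nat \<Rightarrow> nat) \<Rightarrow> nat \<Rightarrow> nat" where
  "thin \<phi> 0 = 0"
| "thin \<phi> (Suc n) = max (Suc (thin \<phi> n)) (\<phi> (thin \<phi> n))"

lemma thin_mono: "strict_mono (thin \<phi>)"
  unfolding strict_mono_Suc_iff by (auto simp: less_max_iff_disj)

lemma thin_prop: "a < b \<Longrightarrow> \<phi> (thin \<phi> a) \<le> thin \<phi> b"
proof -
  assume "a < b"
  then have "Suc a \<le> b" by simp
  then have "thin \<phi> (Suc a) \<le> thin \<phi> b"
    using strict_mono_less_eq[OF thin_mono] by blast
  then show ?thesis by simp
qed

lemma extract_gram:
  fixes g :: "nat \<Rightarrow> nat \<Rightarrow> real"
  assumes bnd: "\<And>a b. \<bar>g a b\<bar> \<le> K"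
  shows "\<exists>r L \<eta>. strict_mono r \<and> \<eta> \<longlonglongrightarrow> 0 \<and> (\<forall>a. 0 \<le> \<eta> a) \<and>
           (\<forall>a b. a < b \<longrightarrow> \<bar>g (r a) (r b) - L\<bar> \<le> \<eta> a)"
proof -
  interpret subseqs "\<lambda>n s. convergent (\<lambda>b. g n (s b))"
  proof
    fix n and s :: "nat \<Rightarrow> nat" assume "strict_mono s"
    obtain r l where "strict_mono r" "((\<lambda>b. g n (s b)) \<circ> r) \<longlonglongrightarrow> l"
      using bounded_real_subseq[of "\<lambda>b. g n (s b)" K] bnd by blast
    then show "\<exists>r'. strict_mono r' \<and> convergent (\<lambda>b. g n ((s \<circ> r') b))"
      unfolding convergent_def o_def by blast
  qed
  define d where "d = diagseq"
  have d: "strict_mono d" unfolding d_def by (rule subseq_diagseq)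
  have conv: "convergent (\<lambda>b. g k (d b))" for k
  proof -
    have "convergent (\<lambda>b. g k ((diagseq \<circ> (+) (Suc k)) b))"
      by (rule diagseq_holds) (auto simp: o_def intro: convergent_subseq_convergent[unfolded o_def])
    then have "convergent (\<lambda>b. g k (diagseq (b + Suc k)))" by (simp add: o_def add.commute)
    then show ?thesis unfolding d_def by (rule convergent_ignore_initial_segment[THEN iffD1])
  qed
  define M where "M a = lim (\<lambda>b. g (d a) (d b))" for a
  have Mlim: "(\<lambda>b. g (d a) (d b)) \<longlonglongrightarrow> M a" for a
    unfolding M_def using conv convergent_LIMSEQ_iff by blast
  have Mb: "\<bar>M a\<bar> \<le> K" for a
  proof -
    have "(\<lambda>b. \<bar>g (d a) (d b)\<bar>) \<longlonglongrightarrow> \<bar>M a\<bar>" by (intro tendsto_rabs Mlim)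
    then show ?thesis using bnd by (intro LIMSEQ_le_const2) auto
  qed
  obtain r2 L where r2: "strict_mono r2" "(M \<circ> r2) \<longlonglongrightarrow> L"
    using bounded_real_subseq[of M K] Mb by blast
  define v where "v = d \<circ> r2"
  have vlim: "(\<lambda>b. g (v a) (v b)) \<longlonglongrightarrow> M (r2 a)" for a
    unfolding v_def o_def using LIMSEQ_subseq_LIMSEQ[OF Mlim r2(1)] by (simp add: o_def)
  have "\<forall>a. \<exists>N. \<forall>b\<ge>N. \<bar>g (v a) (v b) - M (r2 a)\<bar> < 1 / (real a + 1)"
  proof
    fix a
    have "0 < 1 / (real a + 1)" by simp
    from LIMSEQ_D[OF vlim this] show "\<exists>N. \<forall>b\<ge>N. \<bar>g (v a) (v b) - M (r2 a)\<bar> < 1 / (real a + 1)"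
      by auto
  qed
  then obtain \<phi> where phi: "\<And>a b. b \<ge> \<phi> a \<Longrightarrow> \<bar>g (v a) (v b) - M (r2 a)\<bar> < 1 / (real a + 1)"
    by metis
  define r3 where "r3 = thin \<phi>"
  have r3: "strict_mono r3" unfolding r3_def by (rule thin_mono)
  define \<eta> where "\<eta> a = 1 / (real a + 1) + \<bar>M (r2 (r3 a)) - L\<bar>" for a
  have "(\<lambda>a. M (r2 (r3 a))) \<longlonglongrightarrow> L"
    using LIMSEQ_subseq_LIMSEQ[OF r2(2) r3] by (simp add: o_def)
  then have t1: "(\<lambda>a. \<bar>M (r2 (r3 a)) - L\<bar>) \<longlonglongrightarrow> 0"
    by (intro tendsto_rabs_zero) (simp add: LIM_zero)
  have t2: "(\<lambda>a. 1 / (real a + 1)) \<longlonglongrightarrow> (0::real)"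
    using LIMSEQ_inverse_real_of_nat by (simp add: inverse_eq_divide add.commute)
  have eta: "\<eta> \<longlonglongrightarrow> 0" unfolding \<eta>_def using tendsto_add_zero[OF t2 t1] by simp
  have "\<bar>g ((v \<circ> r3) a) ((v \<circ> r3) b) - L\<bar> \<le> \<eta> a" if "a < b" for a b
  proof -
    have "\<phi> (r3 a) \<le> r3 b" unfolding r3_def using thin_prop[OF that] .
    then have "\<bar>g (v (r3 a)) (v (r3 b)) - M (r2 (r3 a))\<bar> < 1 / (real (r3 a) + 1)" by (rule phi)
    moreover have "1 / (real (r3 a) + 1) \<le> 1 / (real a + 1)"
      using seq_suble[OF r3, of a] by (simp add: frac_le)
    ultimately show ?thesis unfolding \<eta>_def o_def by linarith
  qed
  moreover have "\<forall>a. 0 \<le> \<eta> a" unfolding \<eta>_def by simp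
  moreover have "strict_mono (v \<circ> r3)" unfolding v_def using d r2(1) r3 by (intro strict_mono_o)
  ultimately show ?thesis using eta by blast
qed



lemma avg_bound:
  fixes f h :: "nat \<Rightarrow> real"
  assumes "\<And>a. a < Suc N \<Longrightarrow> \<bar>f a - L\<bar> \<le> h a"
  shows "\<bar>(\<Sum>a<Suc N. f a) / real (Suc N) - L\<bar> \<le> (\<Sum>a<Suc N. h a) / real (Suc N)"
proof -
  have eq: "(\<Sum>a<Suc N. f a) / real (Suc N) - L = (\<Sum>a<Suc N. f a - L) / real (Suc N)"
    by (simp add: sum_subtractf field_simps)
  have "\<bar>\<Sum>a<Suc N. f a - L\<bar> \<le> (\<Sum>a<Suc N. \<bar>f a - L\<bar>)" by (rule sum_abs)
  also have "\<dots> \<le> (\<Sum>a<Suc N. h a)" using assms by (intro sum_mono) auto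
  finally show ?thesis unfolding eq by (simp add: divide_right_mono)
qed

lemma aux3: "(x::real) - 2 * y + z \<le> \<bar>x\<bar> + 2 * \<bar>y\<bar> + \<bar>z\<bar>"
  by (simp add: abs_if)

lemma aux12: "(a::real) < d \<Longrightarrow> b < d \<Longrightarrow> x < d \<Longrightarrow> y < d \<Longrightarrow>
   a + a + b + 2 * (a + x + b) + (x + x + y) < 12 * d"
  by (smt (verit))

lemma hilbert_core:
  fixes w :: "nat \<Rightarrow> 'b::{real_inner, complete_space}"
  assumes wb: "\<And>a. norm (w a) \<le> B"
    and eta: "\<eta> \<longlonglongrightarrow> 0" and etann: "\<And>a. 0 \<le> \<eta> a"
    and gl: "\<And>a b. a < b \<Longrightarrow> \<bar>inner (w a) (w b) - L\<bar> \<le> \<eta> a"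
  shows "\<exists>z. (\<lambda>N. inverse (real (Suc N)) *\<^sub>R (\<Sum>a<Suc N. w a)) \<longlonglongrightarrow> z \<and>
          (\<forall>e>0. \<exists>i0. \<forall>a b. i0 \<le> a \<longrightarrow> i0 \<le> b \<longrightarrow> a \<noteq> b \<longrightarrow> \<bar>inner (w a - z) (w b - z)\<bar> \<le> e)"
proof -
  define s where "s N = inverse (real (Suc N)) *\<^sub>R (\<Sum>a<Suc N. w a)" for N
  define c where "c N = (\<Sum>a<Suc N. \<eta> a) / real (Suc N)" for N
  define K where "K = B * B + \<bar>L\<bar>"
  have B0: "0 \<le> B" using wb[of 0] norm_ge_zero order_trans by blast
  have K0: "0 \<le> K" unfolding K_def using B0 by simp
  have c0: "c \<longlonglongrightarrow> 0" unfolding c_def by (rule cesaro0[OF eta etann])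
  have cnn: "0 \<le> c N" for N unfolding c_def using etann by (simp add: sum_nonneg)
  have gall: "\<bar>inner (w a) (w b) - L\<bar> \<le> \<eta> a + \<eta> b + (if a = b then K else 0)" for a b
  proof (cases "a = b")
    case True
    have "\<bar>inner (w a) (w a)\<bar> \<le> norm (w a) * norm (w a)" by (rule Cauchy_Schwarz_ineq2)
    also have "\<dots> \<le> B * B" using wb[of a] B0 by (intro mult_mono) auto
    finally have h: "\<bar>inner (w a) (w a)\<bar> \<le> B * B" .
    have "\<bar>inner (w a) (w a) - L\<bar> \<le> \<bar>inner (w a) (w a)\<bar> + \<bar>L\<bar>" by (rule abs_triangle_ineq4)
    then show ?thesis using True etann[of a] h unfolding K_def by simp
  next
    case False
    then consider "a < b" | "b < a" by linarith
    then show ?thesis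
    proof cases
      case 1 then show ?thesis using gl[of a b] etann[of b] False by simp
    next
      case 2 then show ?thesis using gl[of b a] etann[of a] False by (simp add: inner_commute)
    qed
  qed
  have sw: "inner (s N) (w b) = (\<Sum>a<Suc N. inner (w a) (w b)) / real (Suc N)" for N b
    unfolding s_def by (simp del: sum.lessThan_Suc add: inner_sum_left divide_inverse mult.commute)
  have claim1: "\<bar>inner (s N) (w b) - L\<bar> \<le> c N + \<eta> b + K / real (Suc N)" for N b
  proof -
    have h1: "\<bar>inner (s N) (w b) - L\<bar> \<le> (\<Sum>a<Suc N. \<eta> a + \<eta> b + (if a = b then K else 0)) / real (Suc N)"
      unfolding sw by (rule avg_bound) (rule gall)
    have "(\<Sum>a<Suc N. \<eta> a + \<eta> b + (if a = b then K else 0)) = 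
        (\<Sum>a<Suc N. \<eta> a) + real (Suc N) * \<eta> b + (if b < Suc N then K else 0)"
      by (simp del: sum.lessThan_Suc add: sum.distrib)
    also have "\<dots> \<le> (\<Sum>a<Suc N. \<eta> a) + real (Suc N) * \<eta> b + K" using K0 by simp
    finally have h2: "(\<Sum>a<Suc N. \<eta> a + \<eta> b + (if a = b then K else 0)) \<le> (\<Sum>a<Suc N. \<eta> a) + real (Suc N) * \<eta> b + K" .
    have h3: "((\<Sum>a<Suc N. \<eta> a) + real (Suc N) * \<eta> b + K) / real (Suc N) = c N + \<eta> b + K / real (Suc N)"
      unfolding c_def by (simp del: sum.lessThan_Suc of_nat_Suc add: add_divide_distrib)
    show ?thesis using h1 divide_right_mono[OF h2, of "real (Suc N)"] h3 by simp
  qed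
  have ss: "inner (s N) (s M) = (\<Sum>b<Suc M. inner (s N) (w b)) / real (Suc M)" for N M
    unfolding s_def[of M] by (simp del: sum.lessThan_Suc add: inner_sum_right divide_inverse mult.commute)
  have claim2: "\<bar>inner (s N) (s M) - L\<bar> \<le> c N + c M + K / real (Suc N)" for N M
  proof -
    have h1: "\<bar>inner (s N) (s M) - L\<bar> \<le> (\<Sum>b<Suc M. c N + \<eta> b + K / real (Suc N)) / real (Suc M)"
      unfolding ss by (rule avg_bound) (rule claim1)
    have e1: "(\<Sum>b<Suc M. c N + \<eta> b + K / real (Suc N)) = real (Suc M) * (c N + K / real (Suc N)) + (\<Sum>b<Suc M. \<eta> b)"
      by (simp del: sum.lessThan_Suc of_nat_Suc add: sum.distrib algebra_simps)
    have e2: "(real (Suc M) * (c N + K / real (Suc N)) + (\<Sum>b<Suc M. \<eta> b)) / real (Suc M) = c N + K / real (Suc N) + c M"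
      unfolding c_def[of M] by (simp del: sum.lessThan_Suc of_nat_Suc add: add_divide_distrib)
    show ?thesis using h1 unfolding e1 e2 by linarith
  qed
  have kN: "(\<lambda>N. K / real (Suc N)) \<longlonglongrightarrow> 0"
  proof -
    have "(\<lambda>N. K * inverse (real (Suc N))) \<longlonglongrightarrow> K * 0"
      by (intro tendsto_mult tendsto_const LIMSEQ_inverse_real_of_nat)
    then show ?thesis by (simp add: divide_inverse)
  qed
  have "Cauchy s"
  proof (rule metric_CauchyI)
    fix e :: real assume e: "0 < e"
    define \<delta> where "\<delta> = e * e / 12"
    have d0: "0 < \<delta>" unfolding \<delta>_def using e by simp
    have "eventually (\<lambda>N. c N < \<delta> \<and> K / real (Suc N) < \<delta>) sequentially"
      using order_tendstoD(2)[OF c0 d0] order_tendstoD(2)[OF kN d0] by (rule eventually_conj)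
    then obtain M where M: "\<And>N. N \<ge> M \<Longrightarrow> c N < \<delta> \<and> K / real (Suc N) < \<delta>"
      unfolding eventually_at_top_linorder by blast
    show "\<exists>M. \<forall>m\<ge>M. \<forall>n\<ge>M. dist (s m) (s n) < e"
    proof (intro exI allI impI)
      fix m n assume mn: "M \<le> m" "M \<le> n"
      have "(norm (s m - s n))\<^sup>2 = inner (s m) (s m) - 2 * inner (s m) (s n) + inner (s n) (s n)"
        by (simp add: power2_norm_eq_inner inner_diff_left inner_diff_right inner_commute)
      also have "\<dots> = (inner (s m) (s m) - L) - 2 * (inner (s m) (s n) - L) + (inner (s n) (s n) - L)"
        by simp
      also have "\<dots> \<le> \<bar>inner (s m) (s m) - L\<bar> + 2 * \<bar>inner (s m) (s n) - L\<bar> + \<bar>inner (s n) (s n) - L\<bar>"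
        by (rule aux3)
      also have "\<dots> \<le> (c m + c m + K / real (Suc m)) + 2 * (c m + c n + K / real (Suc m)) + (c n + c n + K / real (Suc n))"
        using claim2[of m m] claim2[of m n] claim2[of n n] by (intro add_mono mult_left_mono) auto
      also have "\<dots> < 12 * \<delta>"
      proof -
        have "c m < \<delta>" "K / real (Suc m) < \<delta>" "c n < \<delta>" "K / real (Suc n) < \<delta>"
          using M[OF mn(1)] M[OF mn(2)] by auto
        then show ?thesis by (rule aux12)
      qed
      also have "\<dots> = e\<^sup>2" unfolding \<delta>_def by (simp add: power2_eq_square)
      finally have "(norm (s m - s n))\<^sup>2 < e\<^sup>2" .
      then have "norm (s m - s n) < e" using e by (simp add: power_less_imp_less_base)
      then show "dist (s m) (s n) < e" by (simp add: dist_norm)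
    qed
  qed
  then obtain z where sz: "s \<longlonglongrightarrow> z" using Cauchy_convergent convergent_def by blast
  have zw: "\<bar>inner z (w b) - L\<bar> \<le> \<eta> b" for b
  proof -
    have "(\<lambda>N. \<bar>inner (s N) (w b) - L\<bar>) \<longlonglongrightarrow> \<bar>inner z (w b) - L\<bar>"
      by (intro tendsto_intros sz)
    moreover have "(\<lambda>N. c N + \<eta> b + K / real (Suc N)) \<longlonglongrightarrow> 0 + \<eta> b + 0"
      by (intro tendsto_intros c0 kN)
    ultimately show ?thesis using claim1 by (intro LIMSEQ_le) auto
  qed
  have zs: "\<bar>inner z (s M) - L\<bar> \<le> c M" for M
  proof -
    have "(\<lambda>N. \<bar>inner (s N) (s M) - L\<bar>) \<longlonglongrightarrow> \<bar>inner z (s M) - L\<bar>"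
      by (intro tendsto_intros sz)
    moreover have "(\<lambda>N. c N + c M + K / real (Suc N)) \<longlonglongrightarrow> 0 + c M + 0"
      by (intro tendsto_intros c0 kN)
    ultimately show ?thesis using claim2 by (intro LIMSEQ_le) auto
  qed
  have zz: "\<bar>inner z z - L\<bar> \<le> 0"
  proof -
    have "(\<lambda>M. \<bar>inner z (s M) - L\<bar>) \<longlonglongrightarrow> \<bar>inner z z - L\<bar>"
      by (intro tendsto_intros sz)
    then show ?thesis using zs c0 by (intro LIMSEQ_le) auto
  qed
  have fin: "\<bar>inner (w a - z) (w b - z)\<bar> \<le> 2 * (\<eta> a + \<eta> b)" if "a \<noteq> b" for a b
  proof -
    have "inner (w a - z) (w b - z) = (inner (w a) (w b) - L) - (inner z (w a) - L) - (inner z (w b) - L) + (inner z z - L)"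
      by (simp add: inner_diff_left inner_diff_right inner_commute)
    then show ?thesis using gall[of a b] zw[of a] zw[of b] zz that by simp
  qed
  have "\<forall>e>0. \<exists>i0. \<forall>a b. i0 \<le> a \<longrightarrow> i0 \<le> b \<longrightarrow> a \<noteq> b \<longrightarrow> \<bar>inner (w a - z) (w b - z)\<bar> \<le> e"
  proof (intro allI impI)
    fix e :: real assume e: "0 < e"
    have "eventually (\<lambda>a. \<eta> a < e / 4) sequentially"
      using order_tendstoD(2)[OF eta, of "e/4"] e by simp
    then obtain i0 where i0: "\<And>a. a \<ge> i0 \<Longrightarrow> \<eta> a < e / 4"
      unfolding eventually_at_top_linorder by blast
    show "\<exists>i0. \<forall>a b. i0 \<le> a \<longrightarrow> i0 \<le> b \<longrightarrow> a \<noteq> b \<longrightarrow> \<bar>inner (w a - z) (w b - z)\<bar> \<le> e"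
    proof (intro exI allI impI)
      fix a b assume "i0 \<le> a" "i0 \<le> b" "a \<noteq> b"
      then show "\<bar>inner (w a - z) (w b - z)\<bar> \<le> e" using fin[OF \<open>a \<noteq> b\<close>, unfolded distrib_left] i0[OF \<open>i0 \<le> a\<close>] i0[OF \<open>i0 \<le> b\<close>] by linarith
    qed
  qed
  then show ?thesis using sz unfolding s_def by blast
qed



lemma tri3: fixes a b c :: "'a::real_normed_vector"
  shows "norm b \<le> norm (a + b + c) + norm a + norm c"
proof -
  have "b = (a + b + c) - a - c" by simp
  then have "norm b = norm ((a + b + c) - a - c)" by simp
  also have "\<dots> \<le> norm ((a + b + c) - a) + norm c" by (rule norm_triangle_ineq4)
  also have "norm ((a + b + c) - a) \<le> norm (a + b + c) + norm a" by (rule norm_triangle_ineq4)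
  finally show ?thesis by simp
qed

lemma final_step:
  fixes J :: "'a::real_normed_vector \<Rightarrow> 'b::real_inner" and u :: "nat \<Rightarrow> 'a"
  assumes Jlin: "bounded_linear J"
    and KI: "0 < KI" "\<And>x. norm x \<le> KI * norm (J x)"
    and uC: "\<And>a. u a \<in> C" and zC: "z \<in> C"
    and cm: "cm_nonexpansive_on C T"
    and approx: "(\<lambda>a. T (u a) - u a) \<longlonglongrightarrow> 0"
    and Db: "\<And>a. norm (J (u a) - J z) \<le> D"
    and orth: "\<forall>e>0. \<exists>i0. \<forall>a b. i0 \<le> a \<longrightarrow> i0 \<le> b \<longrightarrow> a \<noteq> b \<longrightarrow>
                 \<bar>inner (J (u a) - J z) (J (u b) - J z)\<bar> \<le> e"
  shows "T z = z"
proof (rule ccontr)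
  assume ne: "T z \<noteq> z"
  define d where "d = norm (z - T z)"
  have d0: "0 < d" unfolding d_def using ne by simp
  have D0: "0 \<le> D" using Db[of 0] norm_ge_zero order_trans by blast
  define \<epsilon> where "\<epsilon> = d\<^sup>2 / (32 * KI\<^sup>2)"
  have e0: "0 < \<epsilon>" unfolding \<epsilon>_def using d0 KI by simp
  obtain i0 where i0: "\<And>a b. i0 \<le> a \<Longrightarrow> i0 \<le> b \<Longrightarrow> a \<noteq> b \<Longrightarrow>
                 \<bar>inner (J (u a) - J z) (J (u b) - J z)\<bar> \<le> \<epsilon>"
    using orth e0 by blast
  obtain n :: nat where n: "D\<^sup>2 / \<epsilon> < real n" using reals_Archimedean2 by blast
  have Dn: "D\<^sup>2 < real n * \<epsilon>" using n e0 by (simp add: divide_less_eq)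
  have npos: "0 < real n" using Dn e0 D0
    by (metis mult_eq_0_iff not_less not_less_iff_gr_or_eq of_nat_0 of_nat_less_0_iff zero_le_power2 order_le_less_trans)
  have "eventually (\<lambda>a. norm (T (u a) - u a) < d / 4) sequentially"
    using order_tendstoD(2)[OF tendsto_norm_zero[OF approx], of "d/4"] d0 by simp
  then obtain i1 where i1: "\<And>a. a \<ge> i1 \<Longrightarrow> norm (T (u a) - u a) < d / 4"
    unfolding eventually_at_top_linorder by blast
  have lin: "linear J" using Jlin bounded_linear.linear by blast
  have upper: "norm (\<Sum>k\<in>A. (u (i + k) - z)) \<le> real n * d / 4" if "i \<ge> i0" "A \<subseteq> {1..n}" for i A
  proof -
    define h where "h k = J (u (i + k)) - J z" for k
    have finA: "finite A" using that(2) finite_subset by blast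
    have cardA: "real (card A) \<le> real n" using card_mono[OF _ that(2)] by simp
    have Jsum: "J (\<Sum>k\<in>A. (u (i + k) - z)) = (\<Sum>k\<in>A. h k)"
      unfolding h_def by (simp add: real_vector.linear_sum[OF lin] real_vector.linear_diff[OF lin])
    have hh: "inner (h k) (h l) \<le> (if k = l then D\<^sup>2 else 0) + \<epsilon>" if "k \<in> A" "l \<in> A" for k l
    proof (cases "k = l")
      case True
      have "inner (h k) (h k) = (norm (h k))\<^sup>2" by (simp add: power2_norm_eq_inner)
      also have "\<dots> \<le> D\<^sup>2" unfolding h_def using Db[of "i + k"] by (intro power_mono) auto
      finally show ?thesis using True e0 by simp
    next
      case False
      have "k \<ge> 1" "l \<ge> 1" using that \<open>A \<subseteq> {1..n}\<close> by auto
      then have "\<bar>inner (h k) (h l)\<bar> \<le> \<epsilon>" unfolding h_def using i0[of "i + k" "i + l"] \<open>i \<ge> i0\<close> False by simp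
      then show ?thesis using False by simp
    qed
    have "(norm (\<Sum>k\<in>A. h k))\<^sup>2 = (\<Sum>k\<in>A. \<Sum>l\<in>A. inner (h k) (h l))"
      by (simp add: power2_norm_eq_inner inner_sum_left inner_sum_right) (rule sum.swap)
    also have "\<dots> \<le> (\<Sum>k\<in>A. \<Sum>l\<in>A. (if k = l then D\<^sup>2 else 0) + \<epsilon>)"
      using hh by (intro sum_mono) auto
    also have "\<dots> = (\<Sum>k\<in>A. D\<^sup>2 + real (card A) * \<epsilon>)"
      using finA by (intro sum.cong) (auto simp: sum.distrib)
    also have "\<dots> = real (card A) * D\<^sup>2 + real (card A) * (real (card A) * \<epsilon>)"
      by (simp add: algebra_simps)
    also have "\<dots> \<le> real n * D\<^sup>2 + real n * (real n * \<epsilon>)"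
      using cardA e0 by (intro add_mono mult_mono) auto
    also have "\<dots> \<le> real n * (real n * \<epsilon>) + real n * (real n * \<epsilon>)"
      using Dn npos by (intro add_mono mult_left_mono) auto
    also have "\<dots> = (real n * d / (4 * KI))\<^sup>2"
      unfolding \<epsilon>_def using KI by (simp add: power2_eq_square field_simps)
    finally have sq: "(norm (\<Sum>k\<in>A. h k))\<^sup>2 \<le> (real n * d / (4 * KI))\<^sup>2" .
    have nh: "norm (\<Sum>k\<in>A. h k) \<le> real n * d / (4 * KI)"
      using power2_le_imp_le[OF sq] npos d0 KI by simp
    have "norm (\<Sum>k\<in>A. (u (i + k) - z)) \<le> KI * norm (\<Sum>k\<in>A. h k)" using KI(2) Jsum by metis
    also have "\<dots> \<le> KI * (real n * d / (4 * KI))" using nh KI by (intro mult_left_mono) auto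
    also have "\<dots> = real n * d / 4" using KI by simp
    finally show ?thesis .
  qed
  have fin: "finite ((\<lambda>A. norm (\<Sum>k\<in>A. (v (i + k) - y))) ` Pow {1..n})" for v :: "nat \<Rightarrow> 'a" and y i
    by simp
  have up: "cm_block n u z i \<le> real n * d / 4" if "i \<ge> i0" for i
    unfolding cm_block_def using upper[OF that] by (intro Max.boundedI) auto
  have low: "real n * d / 2 \<le> cm_block n (\<lambda>j. T (u j)) (T z) i" if "i \<ge> i0" "i \<ge> i1" for i
  proof -
    define a where "a = (\<Sum>k\<in>{1..n}. (u (i + k) - z))"
    define c where "c = (\<Sum>k\<in>{1..n}. (T (u (i + k)) - u (i + k)))"
    have eq: "(\<Sum>k\<in>{1..n}. (T (u (i + k)) - T z)) = a + real n *\<^sub>R (z - T z) + c"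
    proof -
      have "(\<Sum>k\<in>{1..n}. (T (u (i + k)) - T z)) = (\<Sum>k\<in>{1..n}. (u (i + k) - z) + (z - T z) + (T (u (i + k)) - u (i + k)))"
        by (intro sum.cong) (auto simp: algebra_simps)
      also have "\<dots> = a + (\<Sum>k\<in>{1..n}. (z - T z)) + c" unfolding a_def c_def by (simp only: sum.distrib)
      finally show ?thesis by (simp add: sum_constant_scaleR)
    qed
    have na: "norm a \<le> real n * d / 4" unfolding a_def using upper[OF that(1)] by simp
    have "norm c \<le> (\<Sum>k\<in>{1..n}. norm (T (u (i + k)) - u (i + k)))" unfolding c_def by (rule norm_sum)
    also have "\<dots> \<le> (\<Sum>k\<in>{1..n}. d / 4)" using i1 that(2) by (intro sum_mono) (auto intro: less_imp_le)
    also have "\<dots> = real n * d / 4" by simp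
    finally have nc: "norm c \<le> real n * d / 4" .
    have nm: "norm (real n *\<^sub>R (z - T z)) = real n * d" unfolding d_def by simp
    have "real n * d \<le> norm (\<Sum>k\<in>{1..n}. (T (u (i + k)) - T z)) + norm a + norm c"
    proof -
      have t: "norm (real n *\<^sub>R (z - T z)) \<le> norm (a + real n *\<^sub>R (z - T z) + c) + norm a + norm c"
        by (rule tri3)
      show ?thesis unfolding eq using t nm by linarith
    qed
    then have "real n * d / 2 \<le> norm (\<Sum>k\<in>{1..n}. (T (u (i + k)) - T z))" using na nc by linarith
    also have "\<dots> \<le> cm_block n (\<lambda>j. T (u j)) (T z) i" unfolding cm_block_def
      by (rule Max_ge) auto
    finally show ?thesis .
  qed
  have cmi: "limsup (\<lambda>i. ereal (cm_block n (\<lambda>j. T (u j)) (T z) i)) \<le> limsup (\<lambda>i. ereal (cm_block n u z i))"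
    using cm zC uC unfolding cm_nonexpansive_on_def by blast
  have ev1: "eventually (\<lambda>i. ereal (real n * d / 2) \<le> ereal (cm_block n (\<lambda>j. T (u j)) (T z) i)) sequentially"
    unfolding eventually_at_top_linorder
  proof (rule exI[of _ "max i0 i1"], intro allI impI)
    fix i assume "max i0 i1 \<le> i"
    then have "real n * d / 2 \<le> cm_block n (\<lambda>j. T (u j)) (T z) i" by (intro low) auto
    then show "ereal (real n * d / 2) \<le> ereal (cm_block n (\<lambda>j. T (u j)) (T z) i)" by (simp only: ereal_less_eq(3))
  qed
  have ev2: "eventually (\<lambda>i. ereal (cm_block n u z i) \<le> ereal (real n * d / 4)) sequentially"
    unfolding eventually_at_top_linorder
  proof (rule exI[of _ i0], intro allI impI)
    fix i assume "i0 \<le> i"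
    then have "cm_block n u z i \<le> real n * d / 4" by (intro up)
    then show "ereal (cm_block n u z i) \<le> ereal (real n * d / 4)" by (simp only: ereal_less_eq(3))
  qed
  have "ereal (real n * d / 2) \<le> limsup (\<lambda>i. ereal (cm_block n (\<lambda>j. T (u j)) (T z) i))"
    by (rule le_Limsup[OF _ ev1]) simp
  also note cmi
  also have "limsup (\<lambda>i. ereal (cm_block n u z i)) \<le> ereal (real n * d / 4)"
    by (rule Limsup_bounded[OF ev2])
  finally have "real n * d / 2 \<le> real n * d / 4" by simp
  moreover have "0 < real n * d" using npos d0 by simp
  ultimately show False by linarith
qed



lemma approx_fix:
  fixes C :: "'a::banach set"
  assumes ne: "C \<noteq> {}" and bC: "bounded C" and cC: "closed C" and cvx: "convex C"
    and TC: "T ` C \<subseteq> C" and nx: "nonexpansive_on C T"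
  shows "\<exists>x. (\<forall>m. x m \<in> C) \<and> (\<lambda>m. T (x m) - x m) \<longlonglongrightarrow> 0"
proof -
  obtain c where c: "c \<in> C" using ne by blast
  obtain R where R: "0 < R" "\<And>y. y \<in> C \<Longrightarrow> norm y \<le> R" using bC unfolding bounded_pos by blast
  define t where "t m = real (Suc m) / real (Suc (Suc m))" for m
  have t01: "0 \<le> t m" "t m < 1" for m unfolding t_def by auto
  have "\<forall>m. \<exists>x\<in>C. (1 - t m) *\<^sub>R c + t m *\<^sub>R T x = x"
  proof
    fix m
    have "\<exists>!x\<in>C. (1 - t m) *\<^sub>R c + t m *\<^sub>R T x = x"
    proof (rule Banach_fix)
      show "complete C" using cC by (simp add: complete_eq_closed)
      show "C \<noteq> {}" by fact
      show "0 \<le> t m" "t m < 1" by (rule t01)+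
      show "(\<lambda>x. (1 - t m) *\<^sub>R c + t m *\<^sub>R T x) ` C \<subseteq> C"
        using c TC t01[of m] by (auto intro!: convexD[OF cvx])
      fix x y assume "x \<in> C" "y \<in> C"
      have "dist ((1 - t m) *\<^sub>R c + t m *\<^sub>R T x) ((1 - t m) *\<^sub>R c + t m *\<^sub>R T y) = t m * norm (T x - T y)"
      proof -
        have "(1 - t m) *\<^sub>R c + t m *\<^sub>R T x - ((1 - t m) *\<^sub>R c + t m *\<^sub>R T y) = t m *\<^sub>R (T x - T y)"
          by (simp add: algebra_simps)
        then show ?thesis using t01[of m] by (simp add: dist_norm)
      qed
      also have "\<dots> \<le> t m * dist x y" using nx \<open>x \<in> C\<close> \<open>y \<in> C\<close> t01[of m]
        unfolding nonexpansive_on_def dist_norm by (intro mult_left_mono) auto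
      finally show "dist ((1 - t m) *\<^sub>R c + t m *\<^sub>R T x) ((1 - t m) *\<^sub>R c + t m *\<^sub>R T y) \<le> t m * dist x y" .
    qed
    then show "\<exists>x\<in>C. (1 - t m) *\<^sub>R c + t m *\<^sub>R T x = x" by blast
  qed
  then obtain x where x: "\<And>m. x m \<in> C" "\<And>m. (1 - t m) *\<^sub>R c + t m *\<^sub>R T (x m) = x m" by metis
  have bnd: "norm (T (x m) - x m) \<le> 2 * R / real (Suc (Suc m))" for m
  proof -
    have "T (x m) - x m = T (x m) - ((1 - t m) *\<^sub>R c + t m *\<^sub>R T (x m))"
      using x(2)[of m] by simp
    also have "\<dots> = (1 - t m) *\<^sub>R (T (x m) - c)" by (simp add: algebra_simps)
    finally have "T (x m) - x m = (1 - t m) *\<^sub>R (T (x m) - c)" .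
    moreover have "1 - t m = 1 / real (Suc (Suc m))" unfolding t_def by (simp add: field_simps)
    moreover have "norm (T (x m) - c) \<le> 2 * R"
    proof -
      have "norm (T (x m) - c) \<le> norm (T (x m)) + norm c" by (rule norm_triangle_ineq4)
      also have "\<dots> \<le> R + R" using R(2)[of "T (x m)"] R(2)[OF c] TC x(1)[of m] by (intro add_mono) auto
      finally show ?thesis by simp
    qed
    ultimately show ?thesis by (simp add: divide_right_mono)
  qed
  have "(\<lambda>m. 2 * R / real (Suc (Suc m))) \<longlonglongrightarrow> 0"
  proof -
    have "(\<lambda>m. 2 * R * inverse (real (Suc m))) \<longlonglongrightarrow> 2 * R * 0"
      by (intro tendsto_mult tendsto_const LIMSEQ_inverse_real_of_nat)
    then have "(\<lambda>m. 2 * R / real (Suc m)) \<longlonglongrightarrow> 0" by (simp add: divide_inverse)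
    then show ?thesis using LIMSEQ_Suc by blast
  qed
  then have "(\<lambda>m. T (x m) - x m) \<longlonglongrightarrow> 0"
    by (rule Lim_null_comparison[rotated]) (rule always_eventually, intro allI bnd)
  then show ?thesis using x(1) by blast
qed



theorem corollary4p11:
  fixes J :: "'a::banach \<Rightarrow> 'b::{real_inner, complete_space}"
    and C :: "'a set" and T :: "'a \<Rightarrow> 'a"
  assumes "bounded_linear J" and "bij J" and "bounded_linear (inv J)"
    and "C \<noteq> {}" and "bounded C" and "closed C" and "convex C"
    and "T ` C \<subseteq> C"
    and "cm_nonexpansive_on C T"
  shows "\<exists>x\<in>C. T x = x"
proof -
  note Jlin = assms(1) and Jbij = assms(2) and Ilin = assms(3)
  have nx: "nonexpansive_on C T" using assms(9) by (simp add: cm_nonexpansive_on_def)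
  obtain xs where xs: "\<And>m. xs m \<in> C" "(\<lambda>m. T (xs m) - xs m) \<longlonglongrightarrow> 0"
    using approx_fix[OF assms(4-8) nx] by blast
  obtain KJ where KJ: "0 < KJ" "\<And>x. norm (J x) \<le> norm x * KJ"
    using bounded_linear.pos_bounded[OF Jlin] by blast
  obtain KI where KI: "0 < KI" "\<And>x. norm (inv J x) \<le> norm x * KI"
    using bounded_linear.pos_bounded[OF Ilin] by blast
  have invJ: "inv J (J x) = x" for x using Jbij by (simp add: bij_is_inj)
  have JinvJ: "J (inv J y) = y" for y using Jbij by (simp add: bij_is_surj surj_f_inv_f)
  have KI': "norm x \<le> KI * norm (J x)" for x
    using KI(2)[of "J x"] invJ[of x] by (simp add: mult.commute)
  obtain R where R: "0 < R" "\<And>y. y \<in> C \<Longrightarrow> norm y \<le> R" using assms(5) unfolding bounded_pos by blast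
  define BJ where "BJ = R * KJ"
  have BJ0: "0 \<le> BJ" unfolding BJ_def using R KJ by simp
  have wb: "norm (J (xs a)) \<le> BJ" for a
  proof -
    have "norm (J (xs a)) \<le> norm (xs a) * KJ" by (rule KJ(2))
    also have "\<dots> \<le> R * KJ" using R(2)[OF xs(1)[of a]] KJ by (intro mult_right_mono) auto
    finally show ?thesis unfolding BJ_def .
  qed
  define g where "g a b = inner (J (xs a)) (J (xs b))" for a b
  have gb: "\<bar>g a b\<bar> \<le> BJ * BJ" for a b
  proof -
    have "\<bar>g a b\<bar> \<le> norm (J (xs a)) * norm (J (xs b))" unfolding g_def by (rule Cauchy_Schwarz_ineq2)
    also have "\<dots> \<le> BJ * BJ" using wb BJ0 by (intro mult_mono) auto
    finally show ?thesis .
  qed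
  obtain r L \<eta> where r: "strict_mono r" "\<eta> \<longlonglongrightarrow> 0" "\<forall>a. 0 \<le> \<eta> a"
      "\<forall>a b. a < b \<longrightarrow> \<bar>g (r a) (r b) - L\<bar> \<le> \<eta> a"
    using extract_gram[of g "BJ * BJ", OF gb] by blast
  obtain zH where zH: "(\<lambda>N. inverse (real (Suc N)) *\<^sub>R (\<Sum>a<Suc N. J (xs (r a)))) \<longlonglongrightarrow> zH"
      "\<forall>e>0. \<exists>i0. \<forall>a b. i0 \<le> a \<longrightarrow> i0 \<le> b \<longrightarrow> a \<noteq> b \<longrightarrow>
          \<bar>inner (J (xs (r a)) - zH) (J (xs (r b)) - zH)\<bar> \<le> e"
    using hilbert_core[of "\<lambda>a. J (xs (r a))" BJ \<eta> L] wb r(2,3,4) unfolding g_def by blast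
  define sX where "sX N = inverse (real (Suc N)) *\<^sub>R (\<Sum>a<Suc N. xs (r a))" for N
  have sXC: "sX N \<in> C" for N
  proof -
    have "(\<Sum>j\<in>{..<Suc N}. inverse (real (Suc N)) *\<^sub>R xs (r j)) \<in> C"
      by (rule convex_sum) (use assms(7) xs(1) in auto)
    then show ?thesis unfolding sX_def by (simp only: scaleR_sum_right)
  qed
  have linJ: "linear J" using Jlin bounded_linear.linear by blast
  have JsX: "J (sX N) = inverse (real (Suc N)) *\<^sub>R (\<Sum>a<Suc N. J (xs (r a)))" for N
    unfolding sX_def by (simp del: sum.lessThan_Suc add: linear_cmul[OF linJ] real_vector.linear_sum[OF linJ])
  have "(\<lambda>N. inv J (J (sX N))) \<longlonglongrightarrow> inv J zH"
    unfolding JsX by (rule bounded_linear.tendsto[OF Ilin zH(1)])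
  then have sXlim: "sX \<longlonglongrightarrow> inv J zH" by (simp add: invJ)
  define z where "z = inv J zH"
  have zC: "z \<in> C" unfolding z_def using closed_sequentially[OF assms(6) _ sXlim] sXC by blast
  have Jz: "J z = zH" unfolding z_def by (rule JinvJ)
  have approx: "(\<lambda>a. T (xs (r a)) - xs (r a)) \<longlonglongrightarrow> 0"
    using LIMSEQ_subseq_LIMSEQ[OF xs(2) r(1)] by (simp add: o_def)
  have Db: "norm (J (xs (r a)) - J z) \<le> BJ + norm zH" for a
    unfolding Jz using norm_triangle_ineq4[of "J (xs (r a))" zH] wb[of "r a"] by linarith
  have "T z = z"
    by (rule final_step[OF Jlin KI(1) KI' xs(1) zC assms(9) approx Db]) (use zH(2) Jz in simp)
  then show ?thesis using zC by blast
qed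

end
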